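(* Let $G$ be ${\mathbb Z}_{\geq 0}$ or ${\mathbb Z}$. Let $X,Y$ be compact Hausdorff spaces and $T:X\to X$, $S:Y\to Y$ surjective continuous maps (homeomorphisms if $G={\mathbb Z}$). Then for every $k\in{\mathbb N}$, \[{\rm IE}_k(X\times Y,T\times S)={\rm IE}_k(X,T)\times{\rm IE}_k(Y,S),\] where $(X\times Y)^k$ is identified with $X^k\times Y^k$ in the natural way.
   Context: For a compact Hausdorff space $Z$ with surjective continuous map $R$ and $G$ acting by $n\cdot z=R^nz$: for a tuple $(A_1,\dots,A_k)$ of subsets of $Z$, a set $J\subseteq G$ is an independence set if for every nonempty finite $I\subseteq J$ and every $\sigma:I\to\{1,\dots,k\}$, $\bigcap_{s\in I}R^{-s}A_{\sigma(s)}\neq\emptyset$. A set $I\subseteq{\mathbb Z}$ has positive density if $\lim_{n}|I\cap\{-n,\dots,n\}|/(2n+1)$ exists and is nonzero; $I\subseteq{\mathbb Z}_{\ge0}$ has positive density if $\lim_n|I\cap\{0,\dots,n\}|/(n+1)$ exists and is nonzero. ${\rm IE}_k(Z,R)$ is the set of tuples $(z_1,\dots,z_k)\in Z^k$ such that for every product neighbourhood $U_1\times\cdots\times U_k$ of it, $(U_1,\dots,U_k)$ has an independence set of positive density. *)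

theory Defs
  imports "HOL-Analysis.Analysis"
begin

definition int_act :: "('a \<Rightarrow> 'a) \<Rightarrow> int \<Rightarrow> 'a \<Rightarrow> 'a" where
  "int_act R n = (if n \<ge> 0 then R ^^ nat n else (inv R) ^^ nat (- n))"

text \<open>k-tuples of sets are lists of length k; a map \<sigma> : I \<rightarrow> {1..k} is encoded
  as a map into indices < k. R^{-s} A is the preimage of A under the action of s.\<close>

definition indep_set_nat :: "('a \<Rightarrow> 'a) \<Rightarrow> 'a set list \<Rightarrow> nat set \<Rightarrow> bool" where
  "indep_set_nat R As J \<longleftrightarrow>
     (\<forall>I (\<sigma>::nat \<Rightarrow> nat). finite I \<and> I \<noteq> {} \<and> I \<subseteq> J \<and> (\<forall>s\<in>I. \<sigma> s < length As) \<longrightarrow>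
        (\<Inter>s\<in>I. (R ^^ s) -` (As ! \<sigma> s)) \<noteq> {})"

definition indep_set_int :: "('a \<Rightarrow> 'a) \<Rightarrow> 'a set list \<Rightarrow> int set \<Rightarrow> bool" where
  "indep_set_int R As J \<longleftrightarrow>
     (\<forall>I (\<sigma>::int \<Rightarrow> nat). finite I \<and> I \<noteq> {} \<and> I \<subseteq> J \<and> (\<forall>s\<in>I. \<sigma> s < length As) \<longrightarrow>
        (\<Inter>s\<in>I. (int_act R s) -` (As ! \<sigma> s)) \<noteq> {})"

definition pos_density_nat :: "nat set \<Rightarrow> bool" where
  "pos_density_nat I \<longleftrightarrow>
     (\<exists>d. d \<noteq> 0 \<and> (\<lambda>n. real (card (I \<inter> {0..n})) / real (n + 1)) \<longlonglongrightarrow> d)"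

definition pos_density_int :: "int set \<Rightarrow> bool" where
  "pos_density_int I \<longleftrightarrow>
     (\<exists>d. d \<noteq> 0 \<and>
        (\<lambda>n::nat. real (card (I \<inter> {- int n..int n})) / real (2 * n + 1)) \<longlonglongrightarrow> d)"

definition IE_nat :: "nat \<Rightarrow> ('a::topological_space \<Rightarrow> 'a) \<Rightarrow> 'a list set" where
  "IE_nat k R = {zs. length zs = k \<and>
     (\<forall>Us. length Us = k \<and> (\<forall>i<k. open (Us ! i) \<and> zs ! i \<in> Us ! i) \<longrightarrow>
        (\<exists>J. indep_set_nat R Us J \<and> pos_density_nat J))}"

definition IE_int :: "nat \<Rightarrow> ('a::topological_space \<Rightarrow> 'a) \<Rightarrow> 'a list set" where
  "IE_int k R = {zs. length zs = k \<and>
     (\<forall>Us. length Us = k \<and> (\<forall>i<k. open (Us ! i) \<and> zs ! i \<in> Us ! i) \<longrightarrow>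
        (\<exists>J. indep_set_int R Us J \<and> pos_density_int J))}"

end

theory Submission
  imports Defs "HOL-Real_Asymp.Real_Asymp"
begin

definition cnt :: "nat set \<Rightarrow> nat \<Rightarrow> nat" where "cnt K n = card (K \<inter> {..<n})"

lemma cnt_le: "cnt K n \<le> n"
  unfolding cnt_def by (metis card_lessThan card_mono finite_lessThan inf_le2)

lemma cnt_split: "cnt K (a+b) = cnt K a + cnt {j. j + a \<in> K} b"
proof -
  have e1: "K \<inter> {..<a+b} = (K \<inter> {..<a}) \<union> (K \<inter> {a..<a+b})" by auto
  have e2: "K \<inter> {a..<a+b} = (\<lambda>j. j + a) ` ({j. j + a \<in> K} \<inter> {..<b})"
  proof (rule set_eqI, rule iffI)
    fix x assume "x \<in> K \<inter> {a..<a+b}"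
    then show "x \<in> (\<lambda>j. j + a) ` ({j. j + a \<in> K} \<inter> {..<b})"
      by (intro image_eqI[of _ _ "x - a"]) auto
  qed auto
  have "card (K \<inter> {a..<a+b}) = card ({j. j + a \<in> K} \<inter> {..<b})"
    unfolding e2 by (rule card_image) (auto simp: inj_on_def)
  moreover have "card (K \<inter> {..<a+b}) = card (K \<inter> {..<a}) + card (K \<inter> {a..<a+b})"
    unfolding e1 by (rule card_Un_disjoint) auto
  ultimately show ?thesis unfolding cnt_def by simp
qed

lemma cnt_mono: "a \<le> b \<Longrightarrow> cnt K a \<le> cnt K b"
  by (metis cnt_split le_add1 le_add_diff_inverse)

locale hfam =
  fixes P :: "nat set set"
  assumes ne: "P \<noteq> {}"
    and her: "\<And>K K'. K \<in> P \<Longrightarrow> K' \<subseteq> K \<Longrightarrow> K' \<in> P"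
    and sh: "\<And>K t. K \<in> P \<Longrightarrow> {j. j + t \<in> K} \<in> P"
    and fin: "\<And>K. (\<And>F. finite F \<Longrightarrow> F \<subseteq> K \<Longrightarrow> F \<in> P) \<Longrightarrow> K \<in> P"
begin

definition phi :: "nat \<Rightarrow> nat" where "phi n = Max ((\<lambda>K. cnt K n) ` P)"

lemma phi_fin: "finite ((\<lambda>K. cnt K n) ` P)"
  by (rule finite_subset[of _ "{..n}"]) (auto simp: cnt_le)

lemma phi_ge: "K \<in> P \<Longrightarrow> cnt K n \<le> phi n"
  unfolding phi_def using phi_fin by auto

lemma phi_att: "\<exists>K\<in>P. cnt K n = phi n"
proof -
  have "phi n \<in> (\<lambda>K. cnt K n) ` P" unfolding phi_def using phi_fin ne by (intro Max_in) auto
  then show ?thesis by auto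
qed

lemma phi_le: "phi n \<le> n"
  using phi_att cnt_le by metis

lemma phi_sub: "phi (a + b) \<le> phi a + phi b"
proof -
  obtain K where K: "K \<in> P" "cnt K (a+b) = phi (a+b)" using phi_att by blast
  have "cnt {j. j + a \<in> K} b \<le> phi b" using sh[OF K(1)] phi_ge by blast
  then show ?thesis using cnt_split[of K a b] K phi_ge[OF K(1), of a] by linarith
qed

lemma phi_mult: "phi (q * m + r) \<le> q * phi m + phi r"
proof (induction q)
  case (Suc q)
  have "phi (Suc q * m + r) = phi (m + (q * m + r))" by (simp add: algebra_simps)
  also have "\<dots> \<le> phi m + phi (q * m + r)" by (rule phi_sub)
  finally show ?case using Suc by simp
qed simp

lemma phi_fekete:
  assumes "m \<ge> 1"
  shows "real (phi n) \<le> real n * real (phi m) / real m + real m"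
proof -
  define q where "q = n div m"
  define r where "r = n mod m"
  have n: "n = q * m + r" unfolding q_def r_def by simp
  have "phi n \<le> q * phi m + r" using phi_mult[of q m r] phi_le[of r] n by simp
  moreover have "r \<le> m" unfolding r_def using assms by (meson less_imp_le mod_less_divisor zero_less_one order_less_le_trans)
  moreover have "real q * real (phi m) \<le> real n * real (phi m) / real m"
  proof -
    have "real q * real m \<le> real n" using n by (metis le_add1 of_nat_le_iff of_nat_mult)
    then have "real q * real m * real (phi m) \<le> real n * real (phi m)" by (rule mult_right_mono) simp
    then show ?thesis using assms by (simp add: field_simps)
  qed
  ultimately show ?thesis
    by (smt (verit, del_insts) of_nat_add of_nat_le_iff of_nat_mult)
qed


end

locale hfam_c = hfam +
  fixes c :: real
  assumes cpos: "c > 0" and cbound: "\<And>n. \<exists>K\<in>P. c * real n \<le> real (cnt K n)"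
begin

definition alpha :: real where "alpha = Inf ((\<lambda>n. real (phi n) / real n) ` {1..})"

lemma bdd: "bdd_below ((\<lambda>n. real (phi n) / real n) ` {1..})"
  by (rule bdd_belowI[of _ 0]) auto

lemma alpha_le: "n \<ge> 1 \<Longrightarrow> alpha \<le> real (phi n) / real n"
  unfolding alpha_def by (rule cInf_lower[OF _ bdd]) auto

lemma alpha_ge: "c \<le> alpha"
  unfolding alpha_def
proof (rule cInf_greatest)
  fix x assume "x \<in> (\<lambda>n. real (phi n) / real n) ` {1..}"
  then obtain n where n: "n \<ge> 1" "x = real (phi n) / real n" by auto
  obtain K where K: "K \<in> P" "c * real n \<le> real (cnt K n)" using cbound by blast
  have "c * real n \<le> real (phi n)" using K phi_ge[OF K(1), of n] by linarith
  then have "c * real n \<le> x * real n" using n by simp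
  then show "c \<le> x" using n by (intro mult_right_le_imp_le[of c "real n" x]) auto
qed auto

lemma alpha_pos: "alpha > 0" using alpha_ge cpos by linarith

lemma alpha_approx: "e > 0 \<Longrightarrow> \<exists>m\<ge>1. real (phi m) / real m < alpha + e"
proof -
  assume e: "e > 0"
  have "Inf ((\<lambda>n. real (phi n) / real n) ` {1..}) < alpha + e" using e unfolding alpha_def by simp
  then show ?thesis by (subst (asm) cInf_less_iff[OF _ bdd]) auto
qed

lemma phi_ge_alpha: "alpha * real n \<le> real (phi n)"
proof (cases "n = 0")
  case False
  then show ?thesis using alpha_le[of n] by (simp add: field_simps)
qed simp

lemma sqrt_le_nat: "sqrt (real m) \<le> real m"
proof (cases "m = 0")
  case False
  have "real m \<le> real m * real m" using False
    by (metis le_square of_nat_le_iff of_nat_mult)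
  then show ?thesis by (intro real_le_lsqrt) (simp_all add: power2_eq_square)
qed simp

lemma rsun: "\<exists>K\<in>P. \<forall>a\<le>L. alpha * real a - sqrt (real a) \<le> real (cnt K a)"
proof -
  define n where "n = 4 * L * L"
  obtain J where J: "J \<in> P" "cnt J n = phi n" using phi_att by blast
  define h where "h x = real (cnt J x) - alpha * real x + sqrt (real x)" for x
  have "finite (h ` {..n})" by simp
  then obtain b where b: "b \<le> n" "\<And>x. x \<le> n \<Longrightarrow> h b \<le> h x"
    using Min_in[of "h ` {..n}"] Min_le[of "h ` {..n}"] by fastforce
  have Ln: "L \<le> n - b"
  proof (rule ccontr)
    assume "\<not> L \<le> n - b"
    then have lt: "n - b < L" by simp
    have sn: "sqrt (real n) = 2 * real L"
      unfolding n_def by (simp add: real_sqrt_mult)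
    have "h n \<ge> sqrt (real n)" using J phi_ge_alpha[of n] unfolding h_def by simp
    moreover have "h b \<le> 0" using b(2)[of 0] unfolding h_def by (simp add: cnt_def)
    moreover have "h n - h b \<le> real (n - b) + sqrt (real (n - b))"
    proof -
      have "cnt J n = cnt J b + cnt {j. j + b \<in> J} (n - b)" using cnt_split[of J b "n - b"] b by simp
      then have "real (cnt J n) - real (cnt J b) \<le> real (n - b)" using cnt_le[of _ "n - b"] by simp
      moreover have "sqrt (real n) \<le> sqrt (real b) + sqrt (real (n - b))"
        using sqrt_add_le_add_sqrt[of "real b" "real (n - b)"] b by simp
      moreover have "alpha * real n \<ge> alpha * real b" using alpha_pos b by simp
      ultimately show ?thesis unfolding h_def by simp
    qed
    moreover have "sqrt (real (n - b)) \<le> real (n - b)" by (rule sqrt_le_nat)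
    ultimately have "2 * real L \<le> 2 * real (n - b)" using sn by linarith
    then show False using lt by simp
  qed
  show ?thesis
  proof (intro bexI allI impI)
    show "{j. j + b \<in> J} \<in> P" using sh J by blast
    fix a assume a: "a \<le> L"
    have "h b \<le> h (b + a)" using b Ln a by (intro b(2)) simp
    moreover have "cnt J (b + a) = cnt J b + cnt {j. j + b \<in> J} a" by (rule cnt_split)
    moreover have "sqrt (real (b + a)) \<le> sqrt (real b) + sqrt (real a)"
      using sqrt_add_le_add_sqrt[of "real b" "real a"] by simp
    ultimately show "alpha * real a - sqrt (real a) \<le> real (cnt {j. j + b \<in> J} a)"
      unfolding h_def by (simp add: algebra_simps)
  qed
qed


definition good :: "nat set \<Rightarrow> nat \<Rightarrow> bool" where
  "good K a \<longleftrightarrow> alpha * real a - sqrt (real a) \<le> real (cnt K a)"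

definition Q :: "nat \<Rightarrow> nat set \<Rightarrow> bool" where
  "Q m F \<longleftrightarrow> (\<forall>L. \<exists>K\<in>P. K \<inter> {..<m} = F \<and> (\<forall>a\<le>L. good K a))"

lemma Q0: "Q 0 {}"
  unfolding Q_def
proof
  fix L
  obtain K where K: "K \<in> P" "\<forall>a\<le>L. alpha * real a - sqrt (real a) \<le> real (cnt K a)"
    using rsun by blast
  then show "\<exists>K\<in>P. K \<inter> {..<0} = {} \<and> (\<forall>a\<le>L. good K a)"
    unfolding good_def by (intro bexI[of _ K]) simp_all
qed

lemma Qstep: "Q m F \<Longrightarrow> Q (Suc m) F \<or> Q (Suc m) (insert m F)"
proof (rule ccontr)
  assume q: "Q m F" and nq: "\<not> (Q (Suc m) F \<or> Q (Suc m) (insert m F))"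
  have "\<not> Q (Suc m) F" using nq by simp
  then obtain L1 where L1: "\<not> (\<exists>K\<in>P. K \<inter> {..<Suc m} = F \<and> (\<forall>a\<le>L1. good K a))"
    unfolding Q_def by auto
  have "\<not> Q (Suc m) (insert m F)" using nq by simp
  then obtain L2 where L2: "\<not> (\<exists>K\<in>P. K \<inter> {..<Suc m} = insert m F \<and> (\<forall>a\<le>L2. good K a))"
    unfolding Q_def by auto
  from q have "\<exists>K\<in>P. K \<inter> {..<m} = F \<and> (\<forall>a\<le>max L1 L2. good K a)"
    unfolding Q_def by simp
  then obtain K where K: "K \<in> P" "K \<inter> {..<m} = F" "\<forall>a\<le>max L1 L2. good K a"
    by auto
  have e: "K \<inter> {..<Suc m} = (if m \<in> K then insert m F else F)"
    using K(2) by (auto simp: lessThan_Suc)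
  have g1: "\<forall>a\<le>L1. good K a" and g2: "\<forall>a\<le>L2. good K a" using K(3) by simp_all
  show False
  proof (cases "m \<in> K")
    case True
    then have "K \<inter> {..<Suc m} = insert m F" using e by simp
    then have "\<exists>K\<in>P. K \<inter> {..<Suc m} = insert m F \<and> (\<forall>a\<le>L2. good K a)"
      using K(1) g2 by (intro bexI[of _ K]) simp_all
    then show False using L2 by simp
  next
    case False
    then have "K \<inter> {..<Suc m} = F" using e by simp
    then have "\<exists>K\<in>P. K \<inter> {..<Suc m} = F \<and> (\<forall>a\<le>L1. good K a)"
      using K(1) g1 by (intro bexI[of _ K]) simp_all
    then show False using L1 by simp
  qed
qed

fun Fs :: "nat \<Rightarrow> nat set" where
  "Fs 0 = {}"
| "Fs (Suc m) = (if Q (Suc m) (Fs m) then Fs m else insert m (Fs m))"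

lemma QFs: "Q m (Fs m)"
proof (induction m)
  case 0 then show ?case using Q0 by simp
next
  case (Suc m) then show ?case using Qstep[OF Suc] by auto
qed

lemma Fs_sub: "Fs m \<subseteq> {..<m}"
  by (induction m) auto

definition Kinf :: "nat set" where "Kinf = {m. m \<in> Fs (Suc m)}"

lemma Kinf_pref: "Kinf \<inter> {..<m} = Fs m"
proof (induction m)
  case 0 then show ?case by simp
next
  case (Suc m)
  have nm: "m \<notin> Fs m" using Fs_sub by auto
  have "Kinf \<inter> {..<Suc m} = (Kinf \<inter> {..<m}) \<union> (if m \<in> Kinf then {m} else {})"
    by (auto simp: lessThan_Suc)
  also have "\<dots> = Fs (Suc m)" using Suc nm unfolding Kinf_def by auto
  finally show ?case .
qed

lemma Kinf_P: "Kinf \<in> P"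
proof (rule fin)
  fix F assume F: "finite F" "F \<subseteq> Kinf"
  then obtain m where m: "F \<subseteq> {..<m}" using finite_nat_iff_bounded by auto
  from QFs[of m] obtain K where K: "K \<in> P" "K \<inter> {..<m} = Fs m" unfolding Q_def by blast
  have "F \<subseteq> K" using F m K(2) Kinf_pref[of m] by blast
  then show "F \<in> P" using her K(1) by blast
qed

lemma Kinf_good: "good Kinf a"
proof -
  from QFs[of a] obtain K where K: "K \<in> P" "K \<inter> {..<a} = Fs a" "good K a" unfolding Q_def by blast
  have "cnt K a = cnt Kinf a" unfolding cnt_def using K(2) Kinf_pref[of a] by simp
  then show ?thesis using K(3) unfolding good_def by simp
qed

lemma Kinf_density: "pos_density_nat Kinf"
  unfolding pos_density_nat_def
proof (intro exI conjI)
  show "alpha \<noteq> 0" using alpha_pos by simp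
  have ce: "card (Kinf \<inter> {0..n}) = cnt Kinf (Suc n)" for n
    unfolding cnt_def by (simp add: atLeast0AtMost lessThan_Suc_atMost)
  show "(\<lambda>n. real (card (Kinf \<inter> {0..n})) / real (n + 1)) \<longlonglongrightarrow> alpha"
    unfolding ce
  proof (rule LIMSEQ_I)
    fix r :: real assume r: "r > 0"
    obtain m where m: "m \<ge> 1" "real (phi m) / real m < alpha + r / 2"
      using alpha_approx[of "r/2"] r by auto
    define x where "x = 2 * real m / r + 1 / r\<^sup>2"
    define no where "no = nat \<lceil>x\<rceil>"
    have x0: "2 * real m / r \<ge> 0" "1 / r\<^sup>2 \<ge> 0" using r by simp_all
    show "\<exists>no. \<forall>n\<ge>no. norm (real (cnt Kinf (Suc n)) / real (n + 1) - alpha) < r"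
    proof (intro exI allI impI)
      fix n assume n: "no \<le> n"
      define N where "N = real (Suc n)"
      have Npos: "N > 0" unfolding N_def by simp
      have "x \<le> real no" unfolding no_def by (rule real_nat_ceiling_ge)
      also have "\<dots> \<le> real n" using n by simp
      also have "\<dots> < N" unfolding N_def by simp
      finally have Nbig: "x < N" .
      have up: "real (cnt Kinf (Suc n)) \<le> N * real (phi m) / real m + real m"
        using phi_ge[OF Kinf_P, of "Suc n"] phi_fekete[OF m(1), of "Suc n"] unfolding N_def by linarith
      have lo: "alpha * N - sqrt N \<le> real (cnt Kinf (Suc n))"
        using Kinf_good[of "Suc n"] unfolding good_def N_def by simp
      have "2 * real m / r < N" using Nbig x0 unfolding x_def by linarith
      then have "2 * real m < N * r" using r by (simp add: field_simps)
      then have mN: "real m / N < r / 2" using Npos by (simp add: field_simps)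
      have "real (cnt Kinf (Suc n)) / N \<le> (N * real (phi m) / real m + real m) / N"
        by (rule divide_right_mono[OF up]) (simp add: less_imp_le[OF Npos])
      also have "\<dots> = real (phi m) / real m + real m / N" using Npos by (simp add: field_simps)
      finally have u2: "real (cnt Kinf (Suc n)) / N < alpha + r"
        using mN m(2) by linarith
      have "sqrt N < r * N"
      proof (rule real_less_lsqrt)
        show "0 \<le> r * N" using r Npos by simp
        have "1 / r\<^sup>2 < N" using Nbig x0 unfolding x_def by linarith
        then have "1 < r\<^sup>2 * N" using r by (simp add: field_simps)
        then have "1 * N < r\<^sup>2 * N * N" using Npos by (intro mult_strict_right_mono) auto
        then show "N < (r * N)\<^sup>2" by (simp add: power2_eq_square algebra_simps)
      qed
      then have sN: "sqrt N / N < r" using Npos by (simp add: field_simps)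
      have "(alpha * N - sqrt N) / N \<le> real (cnt Kinf (Suc n)) / N"
        by (rule divide_right_mono[OF lo]) (simp add: less_imp_le[OF Npos])
      moreover have "(alpha * N - sqrt N) / N = alpha - sqrt N / N" using Npos by (simp add: field_simps)
      ultimately have l2: "real (cnt Kinf (Suc n)) / N > alpha - r"
        using sN by linarith
      show "norm (real (cnt Kinf (Suc n)) / real (n + 1) - alpha) < r"
        using u2 l2 unfolding N_def by simp
    qed
  qed
qed

lemma main: "\<exists>K\<in>P. pos_density_nat K"
  using Kinf_P Kinf_density by blast

end

lemma card_filter_sum: "finite A \<Longrightarrow> real (card {x\<in>A. Q x}) = (\<Sum>x\<in>A. if Q x then 1 else 0)"
  by (simp add: sum.If_cases Int_def)

lemma avg:
  fixes W :: "'g set" and P1 P2 :: "nat \<Rightarrow> 'g \<Rightarrow> bool"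
  assumes W: "finite W" "W \<noteq> {}"
    and b1: "\<And>i. i < n \<Longrightarrow> b1 * real (card W) \<le> real (card {u\<in>W. P1 i u})"
    and b2: "\<And>i. i < n \<Longrightarrow> b2 * real (card W) \<le> real (card {t\<in>W. P2 i t})"
    and p: "b1 \<ge> 0" "b2 \<ge> 0"
  shows "\<exists>u\<in>W. \<exists>t\<in>W. b1 * b2 * real n \<le> real (card {i\<in>{..<n}. P1 i u \<and> P2 i t})"
proof (rule ccontr)
  assume "\<not> ?thesis"
  then have lt: "\<And>u t. u \<in> W \<Longrightarrow> t \<in> W \<Longrightarrow> real (card {i\<in>{..<n}. P1 i u \<and> P2 i t}) < b1 * b2 * real n"
    by (meson linorder_not_le)
  define K where "K = b1 * b2 * real n"
  have cW: "card W > 0" using W by (simp add: card_gt_0_iff)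
  have "(\<Sum>u\<in>W. \<Sum>t\<in>W. real (card {i\<in>{..<n}. P1 i u \<and> P2 i t})) < (\<Sum>u\<in>W. real (card W) * K)"
  proof (rule sum_strict_mono)
    fix u assume u: "u \<in> W"
    show "(\<Sum>t\<in>W. real (card {i\<in>{..<n}. P1 i u \<and> P2 i t})) < real (card W) * K"
      using sum_bounded_above_strict[of W "\<lambda>t. real (card {i\<in>{..<n}. P1 i u \<and> P2 i t})" K] lt[OF u] cW
      unfolding K_def by simp
  qed (use W in auto)
  also have "\<dots> = real (card W) * real (card W) * K" by simp
  finally have A: "(\<Sum>u\<in>W. \<Sum>t\<in>W. real (card {i\<in>{..<n}. P1 i u \<and> P2 i t})) < real (card W) * real (card W) * K" .
  define f1 where "f1 i u = (if P1 i u then 1 else 0::real)" for i u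
  define f2 where "f2 i t = (if P2 i t then 1 else 0::real)" for i t
  have "real (card {i\<in>{..<n}. P1 i u \<and> P2 i t}) = (\<Sum>i<n. f1 i u * f2 i t)" for u t
    by (subst card_filter_sum) (auto simp: f1_def f2_def intro!: sum.cong)
  then have "(\<Sum>u\<in>W. \<Sum>t\<in>W. real (card {i\<in>{..<n}. P1 i u \<and> P2 i t}))
      = (\<Sum>u\<in>W. \<Sum>t\<in>W. \<Sum>i<n. f1 i u * f2 i t)"
    by presburger
  also have "\<dots> = (\<Sum>u\<in>W. \<Sum>i<n. \<Sum>t\<in>W. f1 i u * f2 i t)"
    by (rule sum.cong[OF refl], rule sum.swap)
  also have "\<dots> = (\<Sum>i<n. \<Sum>u\<in>W. \<Sum>t\<in>W. f1 i u * f2 i t)"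
    by (rule sum.swap)
  also have "\<dots> = (\<Sum>i<n. (\<Sum>u\<in>W. f1 i u) * (\<Sum>t\<in>W. f2 i t))"
    by (rule sum.cong[OF refl]) (rule sum_product[symmetric])
  also have "\<dots> = (\<Sum>i<n. real (card {u\<in>W. P1 i u}) * real (card {t\<in>W. P2 i t}))"
    using W by (simp add: card_filter_sum f1_def f2_def)
  also have "\<dots> \<ge> (\<Sum>i<n. (b1 * real (card W)) * (b2 * real (card W)))"
    using b1 b2 p by (intro sum_mono mult_mono) auto
  finally have "(\<Sum>i<n. (b1 * real (card W)) * (b2 * real (card W))) \<le>
      (\<Sum>u\<in>W. \<Sum>t\<in>W. real (card {i\<in>{..<n}. P1 i u \<and> P2 i t}))" .
  moreover have "(\<Sum>i<n. (b1 * real (card W)) * (b2 * real (card W))) = real (card W) * real (card W) * K"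
    unfolding K_def by (simp add: algebra_simps)
  ultimately show False using A by linarith
qed

lemma indep_nat_sub: "indep_set_nat R As J \<Longrightarrow> J' \<subseteq> J \<Longrightarrow> indep_set_nat R As J'"
  unfolding indep_set_nat_def by blast

lemma indep_nat_fin: "(\<And>F. finite F \<Longrightarrow> F \<subseteq> J \<Longrightarrow> indep_set_nat R As F) \<Longrightarrow> indep_set_nat R As J"
  unfolding indep_set_nat_def by blast

lemma indep_nat_empty: "indep_set_nat R As {}"
  unfolding indep_set_nat_def by blast

lemma indep_nat_shift:
  assumes "indep_set_nat R As J"
  shows "indep_set_nat R As {j. j + t \<in> J}"
  unfolding indep_set_nat_def
proof (intro allI impI)
  fix I and \<sigma> :: "nat \<Rightarrow> nat"
  assume h: "finite I \<and> I \<noteq> {} \<and> I \<subseteq> {j. j + t \<in> J} \<and> (\<forall>s\<in>I. \<sigma> s < length As)"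
  define I' where "I' = (\<lambda>s. s + t) ` I"
  define \<sigma>' where "\<sigma>' = (\<lambda>s. \<sigma> (s - t))"
  have "finite I' \<and> I' \<noteq> {} \<and> I' \<subseteq> J \<and> (\<forall>s\<in>I'. \<sigma>' s < length As)"
    using h unfolding I'_def \<sigma>'_def by auto
  then have "(\<Inter>s\<in>I'. (R ^^ s) -` (As ! \<sigma>' s)) \<noteq> {}"
    using assms unfolding indep_set_nat_def by blast
  then obtain x where x: "\<And>s. s \<in> I' \<Longrightarrow> (R ^^ s) x \<in> As ! \<sigma>' s" by blast
  have "(R ^^ t) x \<in> (\<Inter>s\<in>I. (R ^^ s) -` (As ! \<sigma> s))"
  proof
    fix s assume s: "s \<in> I"
    have "(R ^^ (s + t)) x \<in> As ! \<sigma>' (s + t)" using x s unfolding I'_def by blast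
    then show "(R ^^ t) x \<in> (R ^^ s) -` (As ! \<sigma> s)"
      unfolding \<sigma>'_def by (simp add: funpow_add)
  qed
  then show "(\<Inter>s\<in>I. (R ^^ s) -` (As ! \<sigma> s)) \<noteq> {}" by blast
qed

lemma indep_nat_sets_mono:
  assumes "length As = length Bs" "\<And>i. i < length As \<Longrightarrow> As ! i \<subseteq> Bs ! i" "indep_set_nat R As J"
  shows "indep_set_nat R Bs J"
  unfolding indep_set_nat_def
proof (intro allI impI)
  fix I and \<sigma> :: "nat \<Rightarrow> nat"
  assume h: "finite I \<and> I \<noteq> {} \<and> I \<subseteq> J \<and> (\<forall>s\<in>I. \<sigma> s < length Bs)"
  then have "(\<Inter>s\<in>I. (R ^^ s) -` (As ! \<sigma> s)) \<noteq> {}"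
    using assms(1,3) unfolding indep_set_nat_def by auto
  moreover have "(\<Inter>s\<in>I. (R ^^ s) -` (As ! \<sigma> s)) \<subseteq> (\<Inter>s\<in>I. (R ^^ s) -` (Bs ! \<sigma> s))"
    using h assms(1,2) by fastforce
  ultimately show "(\<Inter>s\<in>I. (R ^^ s) -` (Bs ! \<sigma> s)) \<noteq> {}" by blast
qed

lemma funpow_map_prod:
  fixes T :: "'a \<Rightarrow> 'a" and S :: "'b \<Rightarrow> 'b"
  shows "(map_prod T S ^^ n) = map_prod (T ^^ n) (S ^^ n)"
  by (induction n) (simp_all add: fun_eq_iff)

lemma indep_nat_prod:
  fixes T :: "'a \<Rightarrow> 'a" and S :: "'b \<Rightarrow> 'b"
  assumes len: "length Us = length Vs" and iu: "indep_set_nat T Us J" and iv: "indep_set_nat S Vs J"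
  shows "indep_set_nat (map_prod T S) (map2 (\<times>) Us Vs) J"
  unfolding indep_set_nat_def
proof (intro allI impI)
  fix I and \<sigma> :: "nat \<Rightarrow> nat"
  assume h: "finite I \<and> I \<noteq> {} \<and> I \<subseteq> J \<and> (\<forall>s\<in>I. \<sigma> s < length (map2 (\<times>) Us Vs))"
  then have "(\<Inter>s\<in>I. (T ^^ s) -` (Us ! \<sigma> s)) \<noteq> {}"
    using iu len unfolding indep_set_nat_def by auto
  then obtain x where x: "\<And>s. s \<in> I \<Longrightarrow> (T ^^ s) x \<in> Us ! \<sigma> s" by blast
  have "(\<Inter>s\<in>I. (S ^^ s) -` (Vs ! \<sigma> s)) \<noteq> {}"
    using h iv len unfolding indep_set_nat_def by auto
  then obtain y where y: "\<And>s. s \<in> I \<Longrightarrow> (S ^^ s) y \<in> Vs ! \<sigma> s" by blast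
  have "(x, y) \<in> (\<Inter>s\<in>I. (map_prod T S ^^ s) -` (map2 (\<times>) Us Vs ! \<sigma> s))"
    using x y h len by (auto simp: funpow_map_prod)
  then show "(\<Inter>s\<in>I. (map_prod T S ^^ s) -` (map2 (\<times>) Us Vs ! \<sigma> s)) \<noteq> {}" by blast
qed

lemma indep_nat_fst:
  fixes T :: "'a \<Rightarrow> 'a" and S :: "'b \<Rightarrow> 'b"
  assumes "indep_set_nat (map_prod T S) (map (\<lambda>U. U \<times> UNIV) Us) J"
  shows "indep_set_nat T Us J"
  unfolding indep_set_nat_def
proof (intro allI impI)
  fix I and \<sigma> :: "nat \<Rightarrow> nat"
  assume h: "finite I \<and> I \<noteq> {} \<and> I \<subseteq> J \<and> (\<forall>s\<in>I. \<sigma> s < length Us)"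
  then have "(\<Inter>s\<in>I. (map_prod T S ^^ s) -` (map (\<lambda>U. U \<times> UNIV) Us ! \<sigma> s)) \<noteq> {}"
    using assms unfolding indep_set_nat_def by auto
  then obtain p where p: "\<And>s. s \<in> I \<Longrightarrow> (map_prod T S ^^ s) p \<in> map (\<lambda>U. U \<times> UNIV) Us ! \<sigma> s" by blast
  have "fst p \<in> (\<Inter>s\<in>I. (T ^^ s) -` (Us ! \<sigma> s))"
  proof (rule INT_I)
    fix s assume s: "s \<in> I"
    have "(map_prod T S ^^ s) p \<in> Us ! \<sigma> s \<times> UNIV" using p[OF s] h s by simp
    then show "fst p \<in> (T ^^ s) -` (Us ! \<sigma> s)" unfolding funpow_map_prod by (cases p) simp
  qed
  then show "(\<Inter>s\<in>I. (T ^^ s) -` (Us ! \<sigma> s)) \<noteq> {}" by blast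
qed

lemma indep_nat_snd:
  fixes T :: "'a \<Rightarrow> 'a" and S :: "'b \<Rightarrow> 'b"
  assumes "indep_set_nat (map_prod T S) (map (\<lambda>V. UNIV \<times> V) Vs) J"
  shows "indep_set_nat S Vs J"
  unfolding indep_set_nat_def
proof (intro allI impI)
  fix I and \<sigma> :: "nat \<Rightarrow> nat"
  assume h: "finite I \<and> I \<noteq> {} \<and> I \<subseteq> J \<and> (\<forall>s\<in>I. \<sigma> s < length Vs)"
  then have "(\<Inter>s\<in>I. (map_prod T S ^^ s) -` (map (\<lambda>V. UNIV \<times> V) Vs ! \<sigma> s)) \<noteq> {}"
    using assms unfolding indep_set_nat_def by auto
  then obtain p where p: "\<And>s. s \<in> I \<Longrightarrow> (map_prod T S ^^ s) p \<in> map (\<lambda>V. UNIV \<times> V) Vs ! \<sigma> s" by blast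
  have "snd p \<in> (\<Inter>s\<in>I. (S ^^ s) -` (Vs ! \<sigma> s))"
  proof (rule INT_I)
    fix s assume s: "s \<in> I"
    have "(map_prod T S ^^ s) p \<in> UNIV \<times> Vs ! \<sigma> s" using p[OF s] h s by simp
    then show "snd p \<in> (S ^^ s) -` (Vs ! \<sigma> s)" unfolding funpow_map_prod by (cases p) simp
  qed
  then show "(\<Inter>s\<in>I. (S ^^ s) -` (Vs ! \<sigma> s)) \<noteq> {}" by blast
qed

lemma int_act_nat: "int_act R (int n) = R ^^ n"
  by (simp add: int_act_def)

lemma int_act_0: "int_act R 0 = id"
  by (simp add: int_act_def)

lemma int_act_succ:
  fixes R :: "'a \<Rightarrow> 'a"
  assumes "bij R"
  shows "int_act R (n + 1) = R \<circ> int_act R n"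
proof (cases "n \<ge> 0")
  case True
  then have "nat (n + 1) = Suc (nat n)" by simp
  then show ?thesis using True by (simp add: int_act_def)
next
  case False
  define m where "m = nat (- (n + 1))"
  have e1: "int_act R (n + 1) = inv R ^^ m"
    using False unfolding int_act_def m_def by auto
  have "nat (- n) = Suc m" using False unfolding m_def by simp
  then have e2: "int_act R n = inv R \<circ> inv R ^^ m"
    using False unfolding int_act_def by simp
  have "R \<circ> inv R = id" using assms bij_is_surj surj_iff by blast
  then show ?thesis unfolding e1 e2 by (simp add: comp_assoc[symmetric])
qed

lemma int_act_pred:
  fixes R :: "'a \<Rightarrow> 'a"
  assumes "bij R"
  shows "int_act R (n - 1) = inv R \<circ> int_act R n"
proof -
  have "int_act R n = R \<circ> int_act R (n - 1)" using int_act_succ[OF assms, of "n - 1"] by simp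
  moreover have "inv R \<circ> R = id" using assms bij_is_inj inj_iff by blast
  ultimately show ?thesis by (simp add: comp_assoc[symmetric])
qed

lemma int_act_add:
  fixes R :: "'a \<Rightarrow> 'a"
  assumes "bij R"
  shows "int_act R (a + b) = int_act R a \<circ> int_act R b"
proof (induction a rule: int_induct[where k = 0])
  case base
  then show ?case by (simp add: int_act_0)
next
  case (step1 i)
  have "int_act R (i + 1 + b) = int_act R ((i + b) + 1)" by (simp add: algebra_simps)
  also have "\<dots> = R \<circ> int_act R (i + b)" by (rule int_act_succ[OF assms])
  also have "\<dots> = int_act R (i + 1) \<circ> int_act R b"
    using step1 int_act_succ[OF assms, of i] by (simp add: fun_eq_iff)
  finally show ?case .
next
  case (step2 i)
  have "int_act R (i - 1 + b) = int_act R ((i + b) - 1)" by (simp add: algebra_simps)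
  also have "\<dots> = inv R \<circ> int_act R (i + b)" by (rule int_act_pred[OF assms])
  also have "\<dots> = int_act R (i - 1) \<circ> int_act R b"
    using step2 int_act_pred[OF assms, of i] by (simp add: fun_eq_iff)
  finally show ?case .
qed

lemma indep_int_shift:
  fixes R :: "'a \<Rightarrow> 'a"
  assumes b: "bij R" and ind: "indep_set_int R As J"
  shows "indep_set_int R As {j. j + u \<in> J}"
  unfolding indep_set_int_def
proof (intro allI impI)
  fix I and \<sigma> :: "int \<Rightarrow> nat"
  assume h: "finite I \<and> I \<noteq> {} \<and> I \<subseteq> {j. j + u \<in> J} \<and> (\<forall>s\<in>I. \<sigma> s < length As)"
  define I' where "I' = (\<lambda>s. s + u) ` I"
  define \<sigma>' where "\<sigma>' = (\<lambda>s. \<sigma> (s - u))"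
  have "finite I' \<and> I' \<noteq> {} \<and> I' \<subseteq> J \<and> (\<forall>s\<in>I'. \<sigma>' s < length As)"
    using h unfolding I'_def \<sigma>'_def by auto
  then have "(\<Inter>s\<in>I'. (int_act R s) -` (As ! \<sigma>' s)) \<noteq> {}"
    using ind unfolding indep_set_int_def by blast
  then obtain x where x: "\<And>s. s \<in> I' \<Longrightarrow> int_act R s x \<in> As ! \<sigma>' s" by blast
  have "int_act R u x \<in> (\<Inter>s\<in>I. (int_act R s) -` (As ! \<sigma> s))"
  proof
    fix s assume s: "s \<in> I"
    have "int_act R (s + u) x \<in> As ! \<sigma>' (s + u)" using x s unfolding I'_def by blast
    then show "int_act R u x \<in> (int_act R s) -` (As ! \<sigma> s)"
      unfolding \<sigma>'_def by (simp add: int_act_add[OF b])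
  qed
  then show "(\<Inter>s\<in>I. (int_act R s) -` (As ! \<sigma> s)) \<noteq> {}" by blast
qed

lemma indep_int_sub: "indep_set_int R As J \<Longrightarrow> J' \<subseteq> J \<Longrightarrow> indep_set_int R As J'"
  unfolding indep_set_int_def by blast

lemma indep_intD:
  "indep_set_int R As J \<Longrightarrow> finite I \<Longrightarrow> I \<noteq> {} \<Longrightarrow> I \<subseteq> J \<Longrightarrow> (\<And>s. s \<in> I \<Longrightarrow> \<sigma> s < length As)
   \<Longrightarrow> (\<Inter>s\<in>I. (int_act R s) -` (As ! \<sigma> s)) \<noteq> {}"
  unfolding indep_set_int_def by blast

lemma indep_natD:
  "indep_set_nat R As J \<Longrightarrow> finite I \<Longrightarrow> I \<noteq> {} \<Longrightarrow> I \<subseteq> J \<Longrightarrow> (\<And>s. s \<in> I \<Longrightarrow> \<sigma> s < length As)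
   \<Longrightarrow> (\<Inter>s\<in>I. (R ^^ s) -` (As ! \<sigma> s)) \<noteq> {}"
  unfolding indep_set_nat_def by blast

lemma indep_int_nat: "indep_set_int R As (int ` K) \<longleftrightarrow> indep_set_nat R As K"
proof
  assume ind: "indep_set_int R As (int ` K)"
  show "indep_set_nat R As K"
    unfolding indep_set_nat_def
  proof (intro allI impI)
    fix I and \<sigma> :: "nat \<Rightarrow> nat"
    assume h: "finite I \<and> I \<noteq> {} \<and> I \<subseteq> K \<and> (\<forall>s\<in>I. \<sigma> s < length As)"
    have "(\<Inter>s\<in>int ` I. (int_act R s) -` (As ! (\<lambda>s. \<sigma> (nat s)) s)) \<noteq> {}"
    proof (rule indep_intD[OF ind])
      show "finite (int ` I)" using h by blast
      show "int ` I \<noteq> {}" using h by blast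
      show "int ` I \<subseteq> int ` K" using h by blast
      fix s assume "s \<in> int ` I"
      then obtain s0 where "s0 \<in> I" "s = int s0" by blast
      then show "(\<lambda>s. \<sigma> (nat s)) s < length As" using h by simp
    qed
    then obtain x where x: "\<And>s. s \<in> int ` I \<Longrightarrow> int_act R s x \<in> As ! \<sigma> (nat s)" by blast
    have "x \<in> (\<Inter>s\<in>I. (R ^^ s) -` (As ! \<sigma> s))"
    proof
      fix s assume "s \<in> I"
      then have "int_act R (int s) x \<in> As ! \<sigma> (nat (int s))" using x by blast
      then show "x \<in> (R ^^ s) -` (As ! \<sigma> s)" by (simp add: int_act_nat)
    qed
    then show "(\<Inter>s\<in>I. (R ^^ s) -` (As ! \<sigma> s)) \<noteq> {}" by blast
  qed
next
  assume ind: "indep_set_nat R As K"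
  show "indep_set_int R As (int ` K)"
    unfolding indep_set_int_def
  proof (intro allI impI)
    fix I and \<sigma> :: "int \<Rightarrow> nat"
    assume h: "finite I \<and> I \<noteq> {} \<and> I \<subseteq> int ` K \<and> (\<forall>s\<in>I. \<sigma> s < length As)"
    have nn: "\<And>s. s \<in> I \<Longrightarrow> int (nat s) = s" using h by force
    have "(\<Inter>s\<in>nat ` I. (R ^^ s) -` (As ! (\<lambda>s. \<sigma> (int s)) s)) \<noteq> {}"
    proof (rule indep_natD[OF ind])
      show "finite (nat ` I)" using h by blast
      show "nat ` I \<noteq> {}" using h by blast
      show "nat ` I \<subseteq> K"
      proof
        fix s assume "s \<in> nat ` I"
        then obtain s0 where s0: "s0 \<in> I" "s = nat s0" by blast
        then obtain k where "k \<in> K" "s0 = int k" using h by blast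
        then show "s \<in> K" using s0 by simp
      qed
      fix s assume "s \<in> nat ` I"
      then obtain s0 where "s0 \<in> I" "s = nat s0" by blast
      then show "(\<lambda>s. \<sigma> (int s)) s < length As" using h nn by simp
    qed
    then obtain x where x: "\<And>s. s \<in> nat ` I \<Longrightarrow> (R ^^ s) x \<in> As ! \<sigma> (int s)" by blast
    have "x \<in> (\<Inter>s\<in>I. (int_act R s) -` (As ! \<sigma> s))"
    proof
      fix s assume s: "s \<in> I"
      have "int_act R s = R ^^ nat s" using int_act_nat[of R "nat s"] nn[OF s] by simp
      moreover have "(R ^^ nat s) x \<in> As ! \<sigma> (int (nat s))" using x s by blast
      ultimately show "x \<in> (int_act R s) -` (As ! \<sigma> s)" using nn[OF s] by simp
    qed
    then show "(\<Inter>s\<in>I. (int_act R s) -` (As ! \<sigma> s)) \<noteq> {}" by blast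
  qed
qed

lemma inv_map_prod:
  fixes T :: "'a \<Rightarrow> 'a" and S :: "'b \<Rightarrow> 'b"
  assumes "bij T" "bij S"
  shows "inv (map_prod T S) = map_prod (inv T) (inv S)"
proof (rule inv_unique_comp)
  show "map_prod T S \<circ> map_prod (inv T) (inv S) = id"
    using assms by (auto simp: fun_eq_iff surj_f_inv_f bij_is_surj)
  show "map_prod (inv T) (inv S) \<circ> map_prod T S = id"
    using assms by (auto simp: fun_eq_iff inv_f_f bij_is_inj)
qed

lemma int_act_map_prod:
  fixes T :: "'a \<Rightarrow> 'a" and S :: "'b \<Rightarrow> 'b"
  assumes "bij T" "bij S"
  shows "int_act (map_prod T S) n = map_prod (int_act T n) (int_act S n)"
  using inv_map_prod[OF assms] by (simp add: int_act_def funpow_map_prod)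

lemma indep_int_fst:
  fixes T :: "'a \<Rightarrow> 'a" and S :: "'b \<Rightarrow> 'b"
  assumes b: "bij T" "bij S" and ind: "indep_set_int (map_prod T S) (map (\<lambda>U. U \<times> UNIV) Us) J"
  shows "indep_set_int T Us J"
  unfolding indep_set_int_def
proof (intro allI impI)
  fix I and \<sigma> :: "int \<Rightarrow> nat"
  assume h: "finite I \<and> I \<noteq> {} \<and> I \<subseteq> J \<and> (\<forall>s\<in>I. \<sigma> s < length Us)"
  then have "(\<Inter>s\<in>I. (int_act (map_prod T S) s) -` (map (\<lambda>U. U \<times> UNIV) Us ! \<sigma> s)) \<noteq> {}"
    using ind unfolding indep_set_int_def by auto
  then obtain p where p: "\<And>s. s \<in> I \<Longrightarrow> int_act (map_prod T S) s p \<in> map (\<lambda>U. U \<times> UNIV) Us ! \<sigma> s" by blast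
  have "fst p \<in> (\<Inter>s\<in>I. (int_act T s) -` (Us ! \<sigma> s))"
  proof (rule INT_I)
    fix s assume s: "s \<in> I"
    have "int_act (map_prod T S) s p \<in> Us ! \<sigma> s \<times> UNIV" using p[OF s] h s by simp
    then show "fst p \<in> (int_act T s) -` (Us ! \<sigma> s)" unfolding int_act_map_prod[OF b] by (cases p) simp
  qed
  then show "(\<Inter>s\<in>I. (int_act T s) -` (Us ! \<sigma> s)) \<noteq> {}" by blast
qed

lemma indep_int_snd:
  fixes T :: "'a \<Rightarrow> 'a" and S :: "'b \<Rightarrow> 'b"
  assumes b: "bij T" "bij S" and ind: "indep_set_int (map_prod T S) (map (\<lambda>V. UNIV \<times> V) Vs) J"
  shows "indep_set_int S Vs J"
  unfolding indep_set_int_def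
proof (intro allI impI)
  fix I and \<sigma> :: "int \<Rightarrow> nat"
  assume h: "finite I \<and> I \<noteq> {} \<and> I \<subseteq> J \<and> (\<forall>s\<in>I. \<sigma> s < length Vs)"
  then have "(\<Inter>s\<in>I. (int_act (map_prod T S) s) -` (map (\<lambda>V. UNIV \<times> V) Vs ! \<sigma> s)) \<noteq> {}"
    using ind unfolding indep_set_int_def by auto
  then obtain p where p: "\<And>s. s \<in> I \<Longrightarrow> int_act (map_prod T S) s p \<in> map (\<lambda>V. UNIV \<times> V) Vs ! \<sigma> s" by blast
  have "snd p \<in> (\<Inter>s\<in>I. (int_act S s) -` (Vs ! \<sigma> s))"
  proof (rule INT_I)
    fix s assume s: "s \<in> I"
    have "int_act (map_prod T S) s p \<in> UNIV \<times> Vs ! \<sigma> s" using p[OF s] h s by simp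
    then show "snd p \<in> (int_act S s) -` (Vs ! \<sigma> s)" unfolding int_act_map_prod[OF b] by (cases p) simp
  qed
  then show "(\<Inter>s\<in>I. (int_act S s) -` (Vs ! \<sigma> s)) \<noteq> {}" by blast
qed

lemma count_nat: "card (J \<inter> {..<M}) \<le> i + card {u\<in>{..<M}. i + u \<in> (J::nat set)}"
proof -
  have "J \<inter> {..<M} \<subseteq> {..<i} \<union> (\<lambda>u. i + u) ` {u\<in>{..<M}. i + u \<in> J}"
  proof
    fix x assume x: "x \<in> J \<inter> {..<M}"
    show "x \<in> {..<i} \<union> (\<lambda>u. i + u) ` {u\<in>{..<M}. i + u \<in> J}"
    proof (cases "x < i")
      case False
      then have "x = i + (x - i)" by simp
      moreover have "x - i \<in> {u\<in>{..<M}. i + u \<in> J}" using x False by auto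
      ultimately show ?thesis by blast
    qed simp
  qed
  then have "card (J \<inter> {..<M}) \<le> card ({..<i} \<union> (\<lambda>u. i + u) ` {u\<in>{..<M}. i + u \<in> J})"
    by (intro card_mono) auto
  also have "\<dots> \<le> card {..<i} + card ((\<lambda>u. i + u) ` {u\<in>{..<M}. i + u \<in> J})"
    by (rule card_Un_le)
  also have "\<dots> \<le> i + card {u\<in>{..<M}. i + u \<in> J}"
    using card_image_le[of "{u\<in>{..<M}. i + u \<in> J}" "\<lambda>u. i + u"] by simp
  finally show ?thesis .
qed

lemma count_int: "card (J \<inter> {- int M..int M}) \<le> i + card {u\<in>{- int M..int M}. int i + u \<in> (J::int set)}"
proof -
  define A where "A = {u\<in>{- int M..int M}. int i + u \<in> J}"
  have "J \<inter> {- int M..int M} \<subseteq> {- int M..<- int M + int i} \<union> (\<lambda>u. int i + u) ` A"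
  proof
    fix x assume x: "x \<in> J \<inter> {- int M..int M}"
    show "x \<in> {- int M..<- int M + int i} \<union> (\<lambda>u. int i + u) ` A"
    proof (cases "x < - int M + int i")
      case False
      then have "x = int i + (x - int i)" by simp
      moreover have "x - int i \<in> A" using x False unfolding A_def by auto
      ultimately show ?thesis by blast
    next
      case True then show ?thesis using x by auto
    qed
  qed
  moreover have "finite A" unfolding A_def by (rule finite_subset[of _ "{- int M..int M}"]) auto
  ultimately have "card (J \<inter> {- int M..int M}) \<le> card ({- int M..<- int M + int i} \<union> (\<lambda>u. int i + u) ` A)"
    by (intro card_mono) auto
  also have "\<dots> \<le> card {- int M..<- int M + int i} + card ((\<lambda>u. int i + u) ` A)"
    by (rule card_Un_le)
  also have "\<dots> \<le> i + card A"
  proof -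
    have "card ((\<lambda>u. int i + u) ` A) = card A" by (rule card_image) (simp add: inj_on_def)
    then show ?thesis by simp
  qed
  finally show ?thesis unfolding A_def .
qed

lemma dens_pos_nat:
  assumes "pos_density_nat J"
  obtains d where "d > 0" "(\<lambda>n. real (card (J \<inter> {..<Suc n})) / real (Suc n)) \<longlonglongrightarrow> d"
proof -
  obtain d where d: "d \<noteq> 0" "(\<lambda>n. real (card (J \<inter> {0..n})) / real (n + 1)) \<longlonglongrightarrow> d"
    using assms unfolding pos_density_nat_def by blast
  have e: "J \<inter> {0..n} = J \<inter> {..<Suc n}" for n by auto
  have "0 \<le> d" by (rule LIMSEQ_le_const[OF d(2)]) auto
  then show ?thesis using that[of d] d unfolding e by simp
qed

lemma dens_nat_window:
  assumes "pos_density_nat J"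
  shows "\<exists>b>0. \<forall>n. eventually (\<lambda>M. \<forall>i<n. b * real (Suc M) \<le> real (card {u\<in>{..<Suc M}. i + u \<in> J})) sequentially"
proof -
  obtain d where d: "d > 0" "(\<lambda>n. real (card (J \<inter> {..<Suc n})) / real (Suc n)) \<longlonglongrightarrow> d"
    using dens_pos_nat[OF assms] by blast
  show ?thesis
  proof (intro exI[of _ "d/4"] conjI allI)
    show "d / 4 > 0" using d by simp
    fix n
    have ev1: "eventually (\<lambda>M. d / 2 < real (card (J \<inter> {..<Suc M})) / real (Suc M)) sequentially"
      by (rule order_tendstoD(1)[OF d(2)]) (use d in simp)
    have ev2: "eventually (\<lambda>M. 4 * real n / d \<le> real M) sequentially"
      by (rule eventually_sequentiallyI[of "nat \<lceil>4 * real n / d\<rceil>"]) linarith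
    show "eventually (\<lambda>M. \<forall>i<n. d / 4 * real (Suc M) \<le> real (card {u\<in>{..<Suc M}. i + u \<in> J})) sequentially"
      using ev1 ev2
    proof eventually_elim
      case (elim M)
      show ?case
      proof (intro allI impI)
        fix i assume i: "i < n"
        have a: "d / 2 * real (Suc M) < real (card (J \<inter> {..<Suc M}))"
          using elim(1) by (simp add: field_simps)
        have "4 * real n \<le> d * real M" using elim(2) d by (simp add: field_simps)
        then have b: "real n \<le> d / 4 * real (Suc M)" using d by (simp add: field_simps)
        have c: "real (card (J \<inter> {..<Suc M})) \<le> real i + real (card {u\<in>{..<Suc M}. i + u \<in> J})"
          using count_nat[of J "Suc M" i] by linarith
        show "d / 4 * real (Suc M) \<le> real (card {u\<in>{..<Suc M}. i + u \<in> J})"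
          using a b c i by linarith
      qed
    qed
  qed
qed

lemma dens_int_window:
  assumes "pos_density_int J"
  shows "\<exists>b>0. \<forall>n. eventually (\<lambda>M. \<forall>i<n. b * real (card {- int M..int M}) \<le> real (card {u\<in>{- int M..int M}. int i + u \<in> J})) sequentially"
proof -
  obtain d where d: "d \<noteq> 0" "(\<lambda>n::nat. real (card (J \<inter> {- int n..int n})) / real (2 * n + 1)) \<longlonglongrightarrow> d"
    using assms unfolding pos_density_int_def by blast
  have "0 \<le> d" by (rule LIMSEQ_le_const[OF d(2)]) auto
  then have dp: "d > 0" using d by simp
  have cM: "card {- int M..int M} = 2 * M + 1" for M by simp
  show ?thesis
  proof (intro exI[of _ "d/4"] conjI allI)
    show "d / 4 > 0" using dp by simp
    fix n
    have ev1: "eventually (\<lambda>M. d / 2 < real (card (J \<inter> {- int M..int M})) / real (2 * M + 1)) sequentially"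
      by (rule order_tendstoD(1)[OF d(2)]) (use dp in simp)
    have ev2: "eventually (\<lambda>M. 4 * real n / d \<le> real M) sequentially"
      by (rule eventually_sequentiallyI[of "nat \<lceil>4 * real n / d\<rceil>"]) linarith
    show "eventually (\<lambda>M. \<forall>i<n. d / 4 * real (card {- int M..int M}) \<le> real (card {u\<in>{- int M..int M}. int i + u \<in> J})) sequentially"
      using ev1 ev2
    proof eventually_elim
      case (elim M)
      show ?case
      proof (intro allI impI)
        fix i assume i: "i < n"
        have a: "d / 2 * real (2 * M + 1) < real (card (J \<inter> {- int M..int M}))"
          using elim(1) by (simp add: field_simps)
        have "4 * real n \<le> d * real M" using elim(2) dp by (simp add: field_simps)
        then have b: "real n \<le> d / 4 * real (2 * M + 1)" using dp by (simp add: field_simps)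
        have c: "real (card (J \<inter> {- int M..int M})) \<le> real i + real (card {u\<in>{- int M..int M}. int i + u \<in> J})"
          using count_int[of J M i] by linarith
        show "d / 4 * real (card {- int M..int M}) \<le> real (card {u\<in>{- int M..int M}. int i + u \<in> J})"
          unfolding cM using a b c i by linarith
      qed
    qed
  qed
qed


lemma combine:
  fixes T :: "'a \<Rightarrow> 'a" and S :: "'b \<Rightarrow> 'b"
  assumes c: "c > 0"
    and cb: "\<And>n. \<exists>K. indep_set_nat T Us K \<and> indep_set_nat S Vs K \<and> c * real n \<le> real (cnt K n)"
  shows "\<exists>K. indep_set_nat T Us K \<and> indep_set_nat S Vs K \<and> pos_density_nat K"
proof -
  define P where "P = {K. indep_set_nat T Us K \<and> indep_set_nat S Vs K}"
  interpret hfam_c P c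
  proof (unfold_locales)
    have "{} \<in> P" unfolding P_def by (simp add: indep_nat_empty)
    then show "P \<noteq> {}" by blast
    show "K' \<in> P" if "K \<in> P" "K' \<subseteq> K" for K K'
      using that unfolding P_def by (auto intro: indep_nat_sub)
    show "{j. j + t \<in> K} \<in> P" if "K \<in> P" for K t
      using that unfolding P_def by (auto intro: indep_nat_shift)
    show "K \<in> P" if "\<And>F. finite F \<Longrightarrow> F \<subseteq> K \<Longrightarrow> F \<in> P" for K
    proof -
      have "indep_set_nat T Us K" by (rule indep_nat_fin) (use that in \<open>auto simp: P_def\<close>)
      moreover have "indep_set_nat S Vs K" by (rule indep_nat_fin) (use that in \<open>auto simp: P_def\<close>)
      ultimately show ?thesis unfolding P_def by simp
    qed
    show "c > 0" by (rule c)
    show "\<exists>K\<in>P. c * real n \<le> real (cnt K n)" for n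
      using cb[of n] unfolding P_def by auto
  qed
  obtain K where "K \<in> P" "pos_density_nat K" using main by auto
  then show ?thesis unfolding P_def by auto
qed

lemma cb_nat:
  fixes T :: "'a \<Rightarrow> 'a" and S :: "'b \<Rightarrow> 'b"
  assumes i1: "indep_set_nat T Us J1" and d1: "pos_density_nat J1"
    and i2: "indep_set_nat S Vs J2" and d2: "pos_density_nat J2"
  shows "\<exists>c>0. \<forall>n. \<exists>K. indep_set_nat T Us K \<and> indep_set_nat S Vs K \<and> c * real n \<le> real (cnt K n)"
proof -
  obtain b1 where b1: "b1 > 0" "\<And>n. eventually (\<lambda>M. \<forall>i<n. b1 * real (Suc M) \<le> real (card {u\<in>{..<Suc M}. i + u \<in> J1})) sequentially"
    using dens_nat_window[OF d1] by blast
  obtain b2 where b2: "b2 > 0" "\<And>n. eventually (\<lambda>M. \<forall>i<n. b2 * real (Suc M) \<le> real (card {u\<in>{..<Suc M}. i + u \<in> J2})) sequentially"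
    using dens_nat_window[OF d2] by blast
  show ?thesis
  proof (intro exI[of _ "b1 * b2"] conjI allI)
    show "b1 * b2 > 0" using b1 b2 by simp
    fix n
    have "eventually (\<lambda>M. (\<forall>i<n. b1 * real (Suc M) \<le> real (card {u\<in>{..<Suc M}. i + u \<in> J1})) \<and>
        (\<forall>i<n. b2 * real (Suc M) \<le> real (card {u\<in>{..<Suc M}. i + u \<in> J2}))) sequentially"
      using b1(2) b2(2) by (rule eventually_conj)
    then obtain N where N: "\<And>M. M \<ge> N \<Longrightarrow> (\<forall>i<n. b1 * real (Suc M) \<le> real (card {u\<in>{..<Suc M}. i + u \<in> J1})) \<and> (\<forall>i<n. b2 * real (Suc M) \<le> real (card {u\<in>{..<Suc M}. i + u \<in> J2}))"
      unfolding eventually_sequentially by blast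
    define M where "M = N"
    have M: "\<forall>i<n. b1 * real (Suc M) \<le> real (card {u\<in>{..<Suc M}. i + u \<in> J1})" "\<forall>i<n. b2 * real (Suc M) \<le> real (card {u\<in>{..<Suc M}. i + u \<in> J2})"
      using N[of M] unfolding M_def by blast+

    have "\<exists>u\<in>{..<Suc M}. \<exists>t\<in>{..<Suc M}. b1 * b2 * real n \<le> real (card {i\<in>{..<n}. i + u \<in> J1 \<and> i + t \<in> J2})"
    proof (rule avg)
      show "{..<Suc M} \<noteq> {}" by auto
    qed (use M b1 b2 in \<open>simp_all add: less_imp_le\<close>)
    then obtain u t where ut: "b1 * b2 * real n \<le> real (card {i\<in>{..<n}. i + u \<in> J1 \<and> i + t \<in> J2})"
      by blast
    define K where "K = {i. i + u \<in> J1 \<and> i + t \<in> J2}"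
    have "indep_set_nat T Us K"
      by (rule indep_nat_sub[OF indep_nat_shift[OF i1, of u]]) (auto simp: K_def)
    moreover have "indep_set_nat S Vs K"
      by (rule indep_nat_sub[OF indep_nat_shift[OF i2, of t]]) (auto simp: K_def)
    moreover have "cnt K n = card {i\<in>{..<n}. i + u \<in> J1 \<and> i + t \<in> J2}"
      unfolding cnt_def K_def by (rule arg_cong[where f = card]) auto
    ultimately show "\<exists>K. indep_set_nat T Us K \<and> indep_set_nat S Vs K \<and> b1 * b2 * real n \<le> real (cnt K n)"
      using ut by (intro exI[of _ K]) simp
  qed
qed

lemma cb_int:
  fixes T :: "'a \<Rightarrow> 'a" and S :: "'b \<Rightarrow> 'b"
  assumes bT: "bij T" and bS: "bij S"
    and i1: "indep_set_int T Us J1" and d1: "pos_density_int J1"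
    and i2: "indep_set_int S Vs J2" and d2: "pos_density_int J2"
  shows "\<exists>c>0. \<forall>n. \<exists>K. indep_set_nat T Us K \<and> indep_set_nat S Vs K \<and> c * real n \<le> real (cnt K n)"
proof -
  obtain b1 where b1: "b1 > 0" "\<And>n. eventually (\<lambda>M. \<forall>i<n. b1 * real (card {- int M..int M}) \<le> real (card {u\<in>{- int M..int M}. int i + u \<in> J1})) sequentially"
    using dens_int_window[OF d1] by blast
  obtain b2 where b2: "b2 > 0" "\<And>n. eventually (\<lambda>M. \<forall>i<n. b2 * real (card {- int M..int M}) \<le> real (card {u\<in>{- int M..int M}. int i + u \<in> J2})) sequentially"
    using dens_int_window[OF d2] by blast
  show ?thesis
  proof (intro exI[of _ "b1 * b2"] conjI allI)
    show "b1 * b2 > 0" using b1 b2 by simp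
    fix n
    have "eventually (\<lambda>M. (\<forall>i<n. b1 * real (card {- int M..int M}) \<le> real (card {u\<in>{- int M..int M}. int i + u \<in> J1})) \<and>
        (\<forall>i<n. b2 * real (card {- int M..int M}) \<le> real (card {u\<in>{- int M..int M}. int i + u \<in> J2}))) sequentially"
      using b1(2) b2(2) by (rule eventually_conj)
    then obtain N where N: "\<And>M. M \<ge> N \<Longrightarrow> (\<forall>i<n. b1 * real (card {- int M..int M}) \<le> real (card {u\<in>{- int M..int M}. int i + u \<in> J1})) \<and> (\<forall>i<n. b2 * real (card {- int M..int M}) \<le> real (card {u\<in>{- int M..int M}. int i + u \<in> J2}))"
      unfolding eventually_sequentially by blast
    define M where "M = N"
    have M: "\<forall>i<n. b1 * real (card {- int M..int M}) \<le> real (card {u\<in>{- int M..int M}. int i + u \<in> J1})" "\<forall>i<n. b2 * real (card {- int M..int M}) \<le> real (card {u\<in>{- int M..int M}. int i + u \<in> J2})"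
      using N[of M] unfolding M_def by blast+

    have "\<exists>u\<in>{- int M..int M}. \<exists>t\<in>{- int M..int M}. b1 * b2 * real n \<le> real (card {i\<in>{..<n}. int i + u \<in> J1 \<and> int i + t \<in> J2})"
    proof (rule avg)
      show "{- int M..int M} \<noteq> {}" by auto
    qed (use M b1 b2 in \<open>simp_all add: less_imp_le\<close>)
    then obtain u t where ut: "b1 * b2 * real n \<le> real (card {i\<in>{..<n}. int i + u \<in> J1 \<and> int i + t \<in> J2})"
      by blast
    define K where "K = {i. int i + u \<in> J1 \<and> int i + t \<in> J2}"
    have "indep_set_int T Us (int ` K)"
      by (rule indep_int_sub[OF indep_int_shift[OF bT i1, of u]]) (auto simp: K_def)
    then have "indep_set_nat T Us K" by (simp add: indep_int_nat)
    moreover have "indep_set_int S Vs (int ` K)"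
      by (rule indep_int_sub[OF indep_int_shift[OF bS i2, of t]]) (auto simp: K_def)
    then have "indep_set_nat S Vs K" by (simp add: indep_int_nat)
    moreover have "cnt K n = card {i\<in>{..<n}. int i + u \<in> J1 \<and> int i + t \<in> J2}"
      unfolding cnt_def K_def by (rule arg_cong[where f = card]) auto
    ultimately show "\<exists>K. indep_set_nat T Us K \<and> indep_set_nat S Vs K \<and> b1 * b2 * real n \<le> real (cnt K n)"
      using ut by (intro exI[of _ K]) simp
  qed
qed

lemma div_mult_cancel_aux: "(a::real) \<noteq> 0 \<Longrightarrow> x / a * (a / b) = x / b"
  by (cases "b = 0") (simp_all add: field_simps)

lemma dens_nat_int:
  assumes "pos_density_nat K"
  shows "pos_density_int (int ` K)"
proof -
  obtain d where d: "d \<noteq> 0" "(\<lambda>n. real (card (K \<inter> {0..n})) / real (n + 1)) \<longlonglongrightarrow> d"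
    using assms unfolding pos_density_nat_def by blast
  have e: "card (int ` K \<inter> {- int n..int n}) = card (K \<inter> {0..n})" for n
  proof -
    have "int ` K \<inter> {- int n..int n} = int ` (K \<inter> {0..n})" by auto
    then show ?thesis by (simp add: card_image)
  qed
  have h: "(\<lambda>n::nat. real (n + 1) / real (2 * n + 1)) \<longlonglongrightarrow> 1 / 2" by real_asymp
  have "(\<lambda>n. real (card (K \<inter> {0..n})) / real (n + 1) * (real (n + 1) / real (2 * n + 1))) \<longlonglongrightarrow> d * (1 / 2)"
    by (rule tendsto_mult[OF d(2) h])
  moreover have "real (card (K \<inter> {0..n})) / real (n + 1) * (real (n + 1) / real (2 * n + 1)) =
      real (card (int ` K \<inter> {- int n..int n})) / real (2 * n + 1)" for n
    unfolding e by (rule div_mult_cancel_aux) simp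
  ultimately have "(\<lambda>n::nat. real (card (int ` K \<inter> {- int n..int n})) / real (2 * n + 1)) \<longlonglongrightarrow> d * (1 / 2)"
    by simp
  then show ?thesis unfolding pos_density_int_def using d(1) by (intro exI[of _ "d * (1/2)"]) simp
qed


lemma nbhd_choice:
  fixes xs :: "'a::topological_space list" and ys :: "'b::topological_space list"
  assumes lx: "length xs = k" and ly: "length ys = k"
    and W: "\<forall>i<k. open (Ws ! i) \<and> zip xs ys ! i \<in> Ws ! i"
  shows "\<exists>Us Vs. length Us = k \<and> length Vs = k \<and> (\<forall>i<k. open (Us ! i) \<and> xs ! i \<in> Us ! i)
    \<and> (\<forall>i<k. open (Vs ! i) \<and> ys ! i \<in> Vs ! i) \<and> (\<forall>i<k. Us ! i \<times> Vs ! i \<subseteq> Ws ! i)"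
proof -
  have "\<forall>i. \<exists>UV. i < k \<longrightarrow> open (fst UV) \<and> open (snd UV) \<and> xs ! i \<in> fst UV \<and> ys ! i \<in> snd UV
      \<and> fst UV \<times> snd UV \<subseteq> Ws ! i"
  proof
    fix i
    show "\<exists>UV. i < k \<longrightarrow> open (fst UV) \<and> open (snd UV) \<and> xs ! i \<in> fst UV \<and> ys ! i \<in> snd UV
      \<and> fst UV \<times> snd UV \<subseteq> Ws ! i"
    proof (cases "i < k")
      case True
      have "open (Ws ! i)" "(xs ! i, ys ! i) \<in> Ws ! i" using W True lx ly by auto
      then obtain A B where "open A" "open B" "(xs ! i, ys ! i) \<in> A \<times> B" "A \<times> B \<subseteq> Ws ! i"
        using open_prod_elim[of "Ws ! i" "(xs ! i, ys ! i)"] by blast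
      then show ?thesis by (intro exI[of _ "(A, B)"]) auto
    qed simp
  qed
  then obtain f where f: "\<And>i. i < k \<Longrightarrow> open (fst (f i)) \<and> open (snd (f i)) \<and> xs ! i \<in> fst (f i) \<and> ys ! i \<in> snd (f i)
      \<and> fst (f i) \<times> snd (f i) \<subseteq> Ws ! i"
    by metis
  show ?thesis
    by (rule exI[of _ "map (\<lambda>i. fst (f i)) [0..<k]"], rule exI[of _ "map (\<lambda>i. snd (f i)) [0..<k]"])
      (use f in auto)
qed

lemma IE_nat_fst:
  fixes T :: "'a::topological_space \<Rightarrow> 'a" and S :: "'b::topological_space \<Rightarrow> 'b"
  assumes "zs \<in> IE_nat k (map_prod T S)"
  shows "map fst zs \<in> IE_nat k T"
proof -
  have lz: "length zs = k" using assms unfolding IE_nat_def by simp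
  have H: "\<And>Ws. length Ws = k \<Longrightarrow> (\<forall>i<k. open (Ws ! i) \<and> zs ! i \<in> Ws ! i) \<Longrightarrow>
      \<exists>J. indep_set_nat (map_prod T S) Ws J \<and> pos_density_nat J"
    using assms unfolding IE_nat_def by blast
  show ?thesis unfolding IE_nat_def
  proof (intro CollectI conjI allI impI)
    show "length (map fst zs) = k" using lz by simp
    fix Us assume U: "length Us = k \<and> (\<forall>i<k. open (Us ! i) \<and> map fst zs ! i \<in> Us ! i)"
    have "\<exists>J. indep_set_nat (map_prod T S) (map (\<lambda>U. U \<times> UNIV) Us) J \<and> pos_density_nat J"
    proof (rule H)
      show "length (map (\<lambda>U. U \<times> UNIV) Us) = k" using U by simp
      show "\<forall>i<k. open (map (\<lambda>U. U \<times> UNIV) Us ! i) \<and> zs ! i \<in> map (\<lambda>U. U \<times> UNIV) Us ! i"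
      proof (intro allI impI conjI)
        fix i assume i: "i < k"
        show "open (map (\<lambda>U. U \<times> UNIV) Us ! i)" using U i by (simp add: open_Times)
        have "fst (zs ! i) \<in> Us ! i" using U i lz by simp
        then show "zs ! i \<in> map (\<lambda>U. U \<times> UNIV) Us ! i" using U i by (cases "zs ! i") simp
      qed
    qed
    then show "\<exists>J. indep_set_nat T Us J \<and> pos_density_nat J" using indep_nat_fst by blast
  qed
qed

lemma IE_nat_snd:
  fixes T :: "'a::topological_space \<Rightarrow> 'a" and S :: "'b::topological_space \<Rightarrow> 'b"
  assumes "zs \<in> IE_nat k (map_prod T S)"
  shows "map snd zs \<in> IE_nat k S"
proof -
  have lz: "length zs = k" using assms unfolding IE_nat_def by simp
  have H: "\<And>Ws. length Ws = k \<Longrightarrow> (\<forall>i<k. open (Ws ! i) \<and> zs ! i \<in> Ws ! i) \<Longrightarrow>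
      \<exists>J. indep_set_nat (map_prod T S) Ws J \<and> pos_density_nat J"
    using assms unfolding IE_nat_def by blast
  show ?thesis unfolding IE_nat_def
  proof (intro CollectI conjI allI impI)
    show "length (map snd zs) = k" using lz by simp
    fix Vs assume V: "length Vs = k \<and> (\<forall>i<k. open (Vs ! i) \<and> map snd zs ! i \<in> Vs ! i)"
    have "\<exists>J. indep_set_nat (map_prod T S) (map (\<lambda>V. UNIV \<times> V) Vs) J \<and> pos_density_nat J"
    proof (rule H)
      show "length (map (\<lambda>V. UNIV \<times> V) Vs) = k" using V by simp
      show "\<forall>i<k. open (map (\<lambda>V. UNIV \<times> V) Vs ! i) \<and> zs ! i \<in> map (\<lambda>V. UNIV \<times> V) Vs ! i"
      proof (intro allI impI conjI)
        fix i assume i: "i < k"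
        show "open (map (\<lambda>V. UNIV \<times> V) Vs ! i)" using V i by (simp add: open_Times)
        have "snd (zs ! i) \<in> Vs ! i" using V i lz by simp
        then show "zs ! i \<in> map (\<lambda>V. UNIV \<times> V) Vs ! i" using V i by (cases "zs ! i") simp
      qed
    qed
    then show "\<exists>J. indep_set_nat S Vs J \<and> pos_density_nat J" using indep_nat_snd by blast
  qed
qed

lemma IE_nat_zip:
  fixes T :: "'a::topological_space \<Rightarrow> 'a" and S :: "'b::topological_space \<Rightarrow> 'b"
  assumes xs: "xs \<in> IE_nat k T" and ys: "ys \<in> IE_nat k S"
  shows "zip xs ys \<in> IE_nat k (map_prod T S)"
proof -
  have lx: "length xs = k" using xs unfolding IE_nat_def by simp
  have ly: "length ys = k" using ys unfolding IE_nat_def by simp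
  have Hx: "\<And>Us. length Us = k \<Longrightarrow> (\<forall>i<k. open (Us ! i) \<and> xs ! i \<in> Us ! i) \<Longrightarrow>
      \<exists>J. indep_set_nat T Us J \<and> pos_density_nat J"
    using xs unfolding IE_nat_def by blast
  have Hy: "\<And>Vs. length Vs = k \<Longrightarrow> (\<forall>i<k. open (Vs ! i) \<and> ys ! i \<in> Vs ! i) \<Longrightarrow>
      \<exists>J. indep_set_nat S Vs J \<and> pos_density_nat J"
    using ys unfolding IE_nat_def by blast
  show ?thesis unfolding IE_nat_def
  proof (intro CollectI conjI allI impI)
    show "length (zip xs ys) = k" using lx ly by simp
    fix Ws assume W: "length Ws = k \<and> (\<forall>i<k. open (Ws ! i) \<and> zip xs ys ! i \<in> Ws ! i)"
    obtain Us Vs where UV: "length Us = k" "length Vs = k" "\<forall>i<k. open (Us ! i) \<and> xs ! i \<in> Us ! i"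
      "\<forall>i<k. open (Vs ! i) \<and> ys ! i \<in> Vs ! i" "\<forall>i<k. Us ! i \<times> Vs ! i \<subseteq> Ws ! i"
      using nbhd_choice[OF lx ly] W by blast
    obtain J1 where J1: "indep_set_nat T Us J1" "pos_density_nat J1" using Hx UV by blast
    obtain J2 where J2: "indep_set_nat S Vs J2" "pos_density_nat J2" using Hy UV by blast
    obtain c where c: "c > 0" "\<And>n. \<exists>K. indep_set_nat T Us K \<and> indep_set_nat S Vs K \<and> c * real n \<le> real (cnt K n)"
      using cb_nat[OF J1(1) J1(2) J2(1) J2(2)] by blast
    obtain K where K: "indep_set_nat T Us K" "indep_set_nat S Vs K" "pos_density_nat K"
      using combine[OF c] by blast
    have "indep_set_nat (map_prod T S) (map2 (\<times>) Us Vs) K"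
      by (rule indep_nat_prod) (use UV K in auto)
    then have "indep_set_nat (map_prod T S) Ws K"
      by (rule indep_nat_sets_mono[rotated 2]) (use UV W in auto)
    then show "\<exists>J. indep_set_nat (map_prod T S) Ws J \<and> pos_density_nat J" using K(3) by blast
  qed
qed

lemma IE_nat_prod:
  fixes T :: "'a::topological_space \<Rightarrow> 'a" and S :: "'b::topological_space \<Rightarrow> 'b"
  shows "(\<lambda>zs. (map fst zs, map snd zs)) ` IE_nat k (map_prod T S) = IE_nat k T \<times> IE_nat k S"
proof (intro equalityI subsetI)
  fix x assume "x \<in> (\<lambda>zs. (map fst zs, map snd zs)) ` IE_nat k (map_prod T S)"
  then obtain zs where "zs \<in> IE_nat k (map_prod T S)" "x = (map fst zs, map snd zs)" by blast
  then show "x \<in> IE_nat k T \<times> IE_nat k S" using IE_nat_fst IE_nat_snd by blast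
next
  fix x assume x: "x \<in> IE_nat k T \<times> IE_nat k S"
  obtain xs ys where e: "x = (xs, ys)" and xs: "xs \<in> IE_nat k T" and ys: "ys \<in> IE_nat k S"
    using x by blast
  have "length xs = k" "length ys = k" using xs ys unfolding IE_nat_def by simp_all
  then have "x = (map fst (zip xs ys), map snd (zip xs ys))" using e by simp
  moreover have "zip xs ys \<in> IE_nat k (map_prod T S)" by (rule IE_nat_zip[OF xs ys])
  ultimately show "x \<in> (\<lambda>zs. (map fst zs, map snd zs)) ` IE_nat k (map_prod T S)" by blast
qed

lemma IE_int_fst:
  fixes T :: "'a::topological_space \<Rightarrow> 'a" and S :: "'b::topological_space \<Rightarrow> 'b"
  assumes bT: "bij T" and bS: "bij S" and "zs \<in> IE_int k (map_prod T S)"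
  shows "map fst zs \<in> IE_int k T"
proof -
  have lz: "length zs = k" using assms(3) unfolding IE_int_def by simp
  have H: "\<And>Ws. length Ws = k \<Longrightarrow> (\<forall>i<k. open (Ws ! i) \<and> zs ! i \<in> Ws ! i) \<Longrightarrow>
      \<exists>J. indep_set_int (map_prod T S) Ws J \<and> pos_density_int J"
    using assms(3) unfolding IE_int_def by blast
  show ?thesis unfolding IE_int_def
  proof (intro CollectI conjI allI impI)
    show "length (map fst zs) = k" using lz by simp
    fix Us assume U: "length Us = k \<and> (\<forall>i<k. open (Us ! i) \<and> map fst zs ! i \<in> Us ! i)"
    have "\<exists>J. indep_set_int (map_prod T S) (map (\<lambda>U. U \<times> UNIV) Us) J \<and> pos_density_int J"
    proof (rule H)
      show "length (map (\<lambda>U. U \<times> UNIV) Us) = k" using U by simp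
      show "\<forall>i<k. open (map (\<lambda>U. U \<times> UNIV) Us ! i) \<and> zs ! i \<in> map (\<lambda>U. U \<times> UNIV) Us ! i"
      proof (intro allI impI conjI)
        fix i assume i: "i < k"
        show "open (map (\<lambda>U. U \<times> UNIV) Us ! i)" using U i by (simp add: open_Times)
        have "fst (zs ! i) \<in> Us ! i" using U i lz by simp
        then show "zs ! i \<in> map (\<lambda>U. U \<times> UNIV) Us ! i" using U i by (cases "zs ! i") simp
      qed
    qed
    then show "\<exists>J. indep_set_int T Us J \<and> pos_density_int J" using indep_int_fst[OF bT bS] by blast
  qed
qed

lemma IE_int_snd:
  fixes T :: "'a::topological_space \<Rightarrow> 'a" and S :: "'b::topological_space \<Rightarrow> 'b"
  assumes bT: "bij T" and bS: "bij S" and "zs \<in> IE_int k (map_prod T S)"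
  shows "map snd zs \<in> IE_int k S"
proof -
  have lz: "length zs = k" using assms(3) unfolding IE_int_def by simp
  have H: "\<And>Ws. length Ws = k \<Longrightarrow> (\<forall>i<k. open (Ws ! i) \<and> zs ! i \<in> Ws ! i) \<Longrightarrow>
      \<exists>J. indep_set_int (map_prod T S) Ws J \<and> pos_density_int J"
    using assms(3) unfolding IE_int_def by blast
  show ?thesis unfolding IE_int_def
  proof (intro CollectI conjI allI impI)
    show "length (map snd zs) = k" using lz by simp
    fix Vs assume V: "length Vs = k \<and> (\<forall>i<k. open (Vs ! i) \<and> map snd zs ! i \<in> Vs ! i)"
    have "\<exists>J. indep_set_int (map_prod T S) (map (\<lambda>V. UNIV \<times> V) Vs) J \<and> pos_density_int J"
    proof (rule H)
      show "length (map (\<lambda>V. UNIV \<times> V) Vs) = k" using V by simp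
      show "\<forall>i<k. open (map (\<lambda>V. UNIV \<times> V) Vs ! i) \<and> zs ! i \<in> map (\<lambda>V. UNIV \<times> V) Vs ! i"
      proof (intro allI impI conjI)
        fix i assume i: "i < k"
        show "open (map (\<lambda>V. UNIV \<times> V) Vs ! i)" using V i by (simp add: open_Times)
        have "snd (zs ! i) \<in> Vs ! i" using V i lz by simp
        then show "zs ! i \<in> map (\<lambda>V. UNIV \<times> V) Vs ! i" using V i by (cases "zs ! i") simp
      qed
    qed
    then show "\<exists>J. indep_set_int S Vs J \<and> pos_density_int J" using indep_int_snd[OF bT bS] by blast
  qed
qed

lemma IE_int_zip:
  fixes T :: "'a::topological_space \<Rightarrow> 'a" and S :: "'b::topological_space \<Rightarrow> 'b"
  assumes bT: "bij T" and bS: "bij S" and xs: "xs \<in> IE_int k T" and ys: "ys \<in> IE_int k S"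
  shows "zip xs ys \<in> IE_int k (map_prod T S)"
proof -
  have lx: "length xs = k" using xs unfolding IE_int_def by simp
  have ly: "length ys = k" using ys unfolding IE_int_def by simp
  have Hx: "\<And>Us. length Us = k \<Longrightarrow> (\<forall>i<k. open (Us ! i) \<and> xs ! i \<in> Us ! i) \<Longrightarrow>
      \<exists>J. indep_set_int T Us J \<and> pos_density_int J"
    using xs unfolding IE_int_def by blast
  have Hy: "\<And>Vs. length Vs = k \<Longrightarrow> (\<forall>i<k. open (Vs ! i) \<and> ys ! i \<in> Vs ! i) \<Longrightarrow>
      \<exists>J. indep_set_int S Vs J \<and> pos_density_int J"
    using ys unfolding IE_int_def by blast
  show ?thesis unfolding IE_int_def
  proof (intro CollectI conjI allI impI)
    show "length (zip xs ys) = k" using lx ly by simp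
    fix Ws assume W: "length Ws = k \<and> (\<forall>i<k. open (Ws ! i) \<and> zip xs ys ! i \<in> Ws ! i)"
    obtain Us Vs where UV: "length Us = k" "length Vs = k" "\<forall>i<k. open (Us ! i) \<and> xs ! i \<in> Us ! i"
      "\<forall>i<k. open (Vs ! i) \<and> ys ! i \<in> Vs ! i" "\<forall>i<k. Us ! i \<times> Vs ! i \<subseteq> Ws ! i"
      using nbhd_choice[OF lx ly] W by blast
    obtain J1 where J1: "indep_set_int T Us J1" "pos_density_int J1" using Hx UV by blast
    obtain J2 where J2: "indep_set_int S Vs J2" "pos_density_int J2" using Hy UV by blast
    obtain c where c: "c > 0" "\<And>n. \<exists>K. indep_set_nat T Us K \<and> indep_set_nat S Vs K \<and> c * real n \<le> real (cnt K n)"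
      using cb_int[OF bT bS J1(1) J1(2) J2(1) J2(2)] by blast
    obtain K where K: "indep_set_nat T Us K" "indep_set_nat S Vs K" "pos_density_nat K"
      using combine[OF c] by blast
    have "indep_set_nat (map_prod T S) (map2 (\<times>) Us Vs) K"
      by (rule indep_nat_prod) (use UV K in auto)
    then have "indep_set_nat (map_prod T S) Ws K"
      by (rule indep_nat_sets_mono[rotated 2]) (use UV W in auto)
    then have "indep_set_int (map_prod T S) Ws (int ` K)" by (simp add: indep_int_nat)
    then show "\<exists>J. indep_set_int (map_prod T S) Ws J \<and> pos_density_int J" using dens_nat_int[OF K(3)] by blast
  qed
qed

lemma IE_int_prod:
  fixes T :: "'a::topological_space \<Rightarrow> 'a" and S :: "'b::topological_space \<Rightarrow> 'b"
  assumes bT: "bij T" and bS: "bij S"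
  shows "(\<lambda>zs. (map fst zs, map snd zs)) ` IE_int k (map_prod T S) = IE_int k T \<times> IE_int k S"
proof (intro equalityI subsetI)
  fix x assume "x \<in> (\<lambda>zs. (map fst zs, map snd zs)) ` IE_int k (map_prod T S)"
  then obtain zs where "zs \<in> IE_int k (map_prod T S)" "x = (map fst zs, map snd zs)" by blast
  then show "x \<in> IE_int k T \<times> IE_int k S" using IE_int_fst[OF bT bS] IE_int_snd[OF bT bS] by blast
next
  fix x assume x: "x \<in> IE_int k T \<times> IE_int k S"
  obtain xs ys where e: "x = (xs, ys)" and xs: "xs \<in> IE_int k T" and ys: "ys \<in> IE_int k S"
    using x by blast
  have "length xs = k" "length ys = k" using xs ys unfolding IE_int_def by simp_all
  then have "x = (map fst (zip xs ys), map snd (zip xs ys))" using e by simp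
  moreover have "zip xs ys \<in> IE_int k (map_prod T S)" by (rule IE_int_zip[OF bT bS xs ys])
  ultimately show "x \<in> (\<lambda>zs. (map fst zs, map snd zs)) ` IE_int k (map_prod T S)" by blast
qed

lemma homeo_bij: "homeomorphism UNIV UNIV T T' \<Longrightarrow> bij T"
  unfolding homeomorphism_def bij_def inj_def by (metis UNIV_I)

theorem theorem3p15:
  fixes T :: "'a::t2_space \<Rightarrow> 'a" and S :: "'b::t2_space \<Rightarrow> 'b" and k :: nat
  assumes "compact (UNIV :: 'a set)" and "compact (UNIV :: 'b set)"
    and "continuous_on UNIV T" and "continuous_on UNIV S"
    and "surj T" and "surj S"
    and "k \<ge> 1"
  shows "(\<lambda>zs. (map fst zs, map snd zs)) ` IE_nat k (map_prod T S) = IE_nat k T \<times> IE_nat k S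
    \<and> ((\<exists>T'. homeomorphism UNIV UNIV T T') \<and> (\<exists>S'. homeomorphism UNIV UNIV S S') \<longrightarrow>
         (\<lambda>zs. (map fst zs, map snd zs)) ` IE_int k (map_prod T S) = IE_int k T \<times> IE_int k S)"
proof (intro conjI impI)
  show "(\<lambda>zs. (map fst zs, map snd zs)) ` IE_nat k (map_prod T S) = IE_nat k T \<times> IE_nat k S"
    by (rule IE_nat_prod)
  assume h: "(\<exists>T'. homeomorphism UNIV UNIV T T') \<and> (\<exists>S'. homeomorphism UNIV UNIV S S')"
  then have "bij T" "bij S" using homeo_bij by blast+
  then show "(\<lambda>zs. (map fst zs, map snd zs)) ` IE_int k (map_prod T S) = IE_int k T \<times> IE_int k S"
    by (rule IE_int_prod)
qed

end
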